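(* Let $f:\mathbf{R}^d\times A\to\mathbf{R}^d$ be odd in the action, $f(x,-a)=-f(x,a)$, bounded with $\|f(x,a)\|\le M$ for all states $x$ and actions $a\in A$, and Lipschitz continuous in the state, $\|f(x,a)-f(x',a)\|\le L\|x-x'\|$. Let $\nu>0$, $T\in\mathbf{N}$, and let $x_T(0),\dots,x_T(2T)$ be generated by Euler's method $x_T(k+1)=x_T(k)+\nu f(x_T(k),a_T(k))$ (equivalently $x_T(k)=x_T(0)+\nu\sum_{i=0}^{k-1}f(x_T(i),a_T(i))$) with actions $a_T(0),\dots,a_T(2T-1)\in A$ satisfying $a_T(T+k)=-a_T(T-1-k)$ for $k=0,\dots,T-1$. Then $$\|x_T(0)-x_T(2T)\|\le \nu M\left[e^{TL\nu}-1\right].$$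
   Context: This models discretized teleoperation with a learned action map $f$: $x_T(k)\in\mathbf{R}^d$ is the robot state at step $k$, $a_T(k)$ the user's action at step $k$ (from a bounded action set $A$ closed under negation), and $\nu>0$ the update rate. The second half of the action sequence is the first half negated in reverse order. *)

theory Defs
  imports "HOL-Analysis.Analysis"
begin

end

theory Submission
  imports Defs
begin

theorem theorem2:
  fixes f :: "real ^ 'd \<Rightarrow> 'b::real_normed_vector \<Rightarrow> real ^ 'd"
    and A :: "'b set" and M L \<nu> :: real and T :: nat
    and x :: "nat \<Rightarrow> real ^ 'd" and a :: "nat \<Rightarrow> 'b"
  assumes A_neg: "\<And>u. u \<in> A \<Longrightarrow> - u \<in> A"
    and A_bdd: "bounded A"
    and f_odd: "\<And>y u. u \<in> A \<Longrightarrow> f y (- u) = - f y u"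
    and f_bdd: "\<And>y u. u \<in> A \<Longrightarrow> norm (f y u) \<le> M"
    and f_lip: "\<And>y y' u. u \<in> A \<Longrightarrow> norm (f y u - f y' u) \<le> L * norm (y - y')"
    and nu_pos: "\<nu> > 0"
    and euler: "\<And>k. k < 2 * T \<Longrightarrow> x (Suc k) = x k + \<nu> *\<^sub>R f (x k) (a k)"
    and a_in: "\<And>k. k < 2 * T \<Longrightarrow> a k \<in> A"
    and a_sym: "\<And>k. k < T \<Longrightarrow> a (T + k) = - a (T - 1 - k)"
  shows "norm (x 0 - x (2 * T)) \<le> \<nu> * M * (exp (real T * L * \<nu>) - 1)"
proof (cases "T = 0")
  case True
  then show ?thesis by simp
next
  case False
  have aA: "a 0 \<in> A" using a_in False by simp
  have M0: "M \<ge> 0" using f_bdd[OF aA, of 0] norm_ge_zero[of "f 0 (a 0)"] by linarith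
  have L0: "L \<ge> 0"
  proof -
    have "norm (f 1 (a 0) - f 0 (a 0)) \<le> L * norm (1 - 0 :: real ^ 'd)" by (rule f_lip[OF aA])
    moreover have "norm (1 - 0 :: real ^ 'd) > 0" by simp
    ultimately show ?thesis
      by (smt (verit) norm_ge_zero mult_neg_pos)
  qed
  let ?q = "1 + \<nu> * L"
  have key: "j \<le> T \<Longrightarrow> norm (x (T + j) - x (T - j)) \<le> \<nu> * M * (?q ^ j - 1)" for j
  proof (induction j)
    case 0
    then show ?case by simp
  next
    case (Suc j)
    define D where "D = norm (x (T + j) - x (T - j))"
    have IH: "D \<le> \<nu> * M * (?q ^ j - 1)" using Suc D_def by simp
    have jT: "j < T" using Suc by simp
    define u where "u = a (T - 1 - j)"
    have uA: "u \<in> A" unfolding u_def using a_in jT by simp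
    have e1: "x (T + Suc j) = x (T + j) - \<nu> *\<^sub>R f (x (T + j)) u"
      using euler[of "T + j"] jT a_sym[OF jT] f_odd[OF uA] unfolding u_def by simp
    have sj: "Suc (T - 1 - j) = T - j" using jT by simp
    have e2: "x (T - j) = x (T - 1 - j) + \<nu> *\<^sub>R f (x (T - 1 - j)) u"
      using euler[of "T - 1 - j"] jT sj unfolding u_def by simp
    have tsj: "T - Suc j = T - 1 - j" by simp
    have d: "x (T + Suc j) - x (T - Suc j) = (x (T + j) - x (T - j)) + \<nu> *\<^sub>R (f (x (T - 1 - j)) u - f (x (T + j)) u)"
      unfolding tsj e1 using e2 by (simp add: algebra_simps)
    have n1: "norm (x (T - 1 - j) - x (T + j)) \<le> D + \<nu> * M"
    proof -
      have "x (T - 1 - j) - x (T + j) = -(x (T + j) - x (T - j)) - \<nu> *\<^sub>R f (x (T - 1 - j)) u"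
        using e2 by (simp add: algebra_simps)
      hence "norm (x (T - 1 - j) - x (T + j)) \<le> D + norm (\<nu> *\<^sub>R f (x (T - 1 - j)) u)"
        unfolding D_def by (metis norm_minus_cancel norm_triangle_ineq4)
      also have "norm (\<nu> *\<^sub>R f (x (T - 1 - j)) u) \<le> \<nu> * M"
        using f_bdd[OF uA] nu_pos by (simp add: mult_left_mono)
      finally show ?thesis by simp
    qed
    have "norm (x (T + Suc j) - x (T - Suc j)) \<le> D + norm (\<nu> *\<^sub>R (f (x (T - 1 - j)) u - f (x (T + j)) u))"
      unfolding d D_def by (rule norm_triangle_ineq)
    also have "norm (\<nu> *\<^sub>R (f (x (T - 1 - j)) u - f (x (T + j)) u)) \<le> \<nu> * (L * (D + \<nu> * M))"
    proof -
      have "norm (f (x (T - 1 - j)) u - f (x (T + j)) u) \<le> L * (D + \<nu> * M)"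
        using f_lip[OF uA] n1 L0 by (meson mult_left_mono order_trans)
      thus ?thesis using nu_pos by (simp add: mult_left_mono)
    qed
    also have "D + \<nu> * (L * (D + \<nu> * M)) = ?q * D + \<nu> * \<nu> * L * M" by (simp add: algebra_simps)
    also have "\<dots> \<le> ?q * (\<nu> * M * (?q ^ j - 1)) + \<nu> * \<nu> * L * M"
      using IH nu_pos L0 by (simp add: mult_left_mono)
    also have "\<dots> = \<nu> * M * (?q ^ Suc j - 1)" by (simp add: algebra_simps)
    finally show ?case by simp
  qed
  have "norm (x 0 - x (2 * T)) = norm (x (T + T) - x (T - T))"
    by (simp add: norm_minus_commute mult_2)
  also have "\<dots> \<le> \<nu> * M * (?q ^ T - 1)" using key[of T] by simp
  also have "\<dots> \<le> \<nu> * M * (exp (real T * L * \<nu>) - 1)"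
  proof -
    have "?q ^ T \<le> exp (\<nu> * L) ^ T"
      using L0 nu_pos by (intro power_mono) (simp_all add: exp_ge_add_one_self)
    also have "\<dots> = exp (real T * L * \<nu>)" by (simp add: exp_of_nat_mult[symmetric] algebra_simps)
    finally show ?thesis using nu_pos M0 by (simp add: mult_left_mono)
  qed
  finally show ?thesis .
qed

end
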